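(* Let $T$ be a rooted binary phylogenetic tree under the $N_2$ model. Then $RA_{\rm MP}(T)\ge RA_\varphi(T)$.
   Context: A rooted binary phylogenetic tree is a finite tree with a distinguished root vertex $\rho$ of out-degree 2, all edges directed away from $\rho$, and every other vertex of in-degree 1 and out-degree 0 or 2; out-degree-0 vertices are leaves, forming the leaf set $X$. Under the Neyman 2-state model $N_2$, each edge $e$ carries a substitution probability $p_e\in[0,\frac12]$; given the root state $F(\rho)$, states propagate independently along edges, each edge changing state with probability $p_e$; $f=F|_X$. Fitch sets: each leaf $x$ gets $\{f(x)\}$; a vertex with children $v_1,v_2$ gets $\mathrm{FS}(v_1)\cap\mathrm{FS}(v_2)$ if nonempty, else the union. $\mathrm{MP}(f,T)$ is a uniformly random element of $\mathrm{FS}(\rho)$, and $RA_{\rm MP}(T)=\mathbb P(\mathrm{MP}(f,T)=\alpha\mid F(\rho)=\alpha)$. The coin-toss method $\varphi$: leaves get their states; proceeding towards the root, a vertex whose two children have equal states gets that state, otherwise one of the two chosen by an independent fair coin toss; $RA_\varphi(T)$ is the probability that the state assigned to $\rho$ equals $F(\rho)$. *)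

theory Defs
  imports "HOL-Probability.Probability_Mass_Function"
begin

text \<open>A vertex is either a leaf, or an internal vertex with two children; the real
  number next to each child is the substitution probability of the edge leading
  to that child. States are the two states of N2, modelled as bool.
  Leaves are identified by their left-to-right position; a character f on X is
  the list of leaf states in this order.\<close>

datatype ptree = Leaf | Node real ptree real ptree

fun valid_probs :: "ptree \<Rightarrow> bool" where
  "valid_probs Leaf = True"
| "valid_probs (Node p1 l p2 r) =
     (0 \<le> p1 \<and> p1 \<le> 1/2 \<and> 0 \<le> p2 \<and> p2 \<le> 1/2 \<and> valid_probs l \<and> valid_probs r)"

fun nleaves :: "ptree \<Rightarrow> nat" where
  "nleaves Leaf = 1"
| "nleaves (Node _ l _ r) = nleaves l + nleaves r"

definition edge :: "real \<Rightarrow> bool \<Rightarrow> bool pmf" where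
  "edge p s = map_pmf (\<lambda>c. if c then \<not> s else s) (bernoulli_pmf p)"

fun leaf_char :: "ptree \<Rightarrow> bool \<Rightarrow> bool list pmf" where
  "leaf_char Leaf s = return_pmf [s]"
| "leaf_char (Node p1 l p2 r) s =
     edge p1 s \<bind> (\<lambda>s1. edge p2 s \<bind> (\<lambda>s2.
     leaf_char l s1 \<bind> (\<lambda>f1. leaf_char r s2 \<bind> (\<lambda>f2.
     return_pmf (f1 @ f2)))))"

definition fitch_comb :: "bool set \<Rightarrow> bool set \<Rightarrow> bool set" where
  "fitch_comb A B = (if A \<inter> B \<noteq> {} then A \<inter> B else A \<union> B)"

fun fitch :: "ptree \<Rightarrow> bool list \<Rightarrow> bool set" where
  "fitch Leaf f = {hd f}"
| "fitch (Node _ l _ r) f =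
     fitch_comb (fitch l (take (nleaves l) f)) (fitch r (drop (nleaves l) f))"

definition MP :: "ptree \<Rightarrow> bool list \<Rightarrow> bool pmf" where
  "MP T f = pmf_of_set (fitch T f)"

fun coin :: "ptree \<Rightarrow> bool list \<Rightarrow> bool pmf" where
  "coin Leaf f = return_pmf (hd f)"
| "coin (Node _ l _ r) f =
     coin l (take (nleaves l) f) \<bind> (\<lambda>a. coin r (drop (nleaves l) f) \<bind> (\<lambda>b.
     (if a = b then return_pmf a
      else map_pmf (\<lambda>c. if c then a else b) (bernoulli_pmf (1/2)))))"

definition RA_MP :: "ptree \<Rightarrow> bool \<Rightarrow> real" where
  "RA_MP T \<alpha> = pmf (leaf_char T \<alpha> \<bind> (\<lambda>f. MP T f)) \<alpha>"

definition RA_coin :: "ptree \<Rightarrow> bool \<Rightarrow> real" where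
  "RA_coin T \<alpha> = pmf (leaf_char T \<alpha> \<bind> (\<lambda>f. coin T f)) \<alpha>"

end

theory Submission
  imports Defs
begin


lemma lc_len: "f \<in> set_pmf (leaf_char T s) \<Longrightarrow> length f = nleaves T"
  by (induction T arbitrary: s f) (auto simp: set_bind_pmf)

definition FD :: "ptree \<Rightarrow> bool \<Rightarrow> bool set pmf" where
  "FD T s = map_pmf (fitch T) (leaf_char T s)"
definition CD :: "ptree \<Rightarrow> bool \<Rightarrow> bool pmf" where
  "CD T s = leaf_char T s \<bind> coin T"

definition cmb :: "bool \<Rightarrow> bool \<Rightarrow> bool pmf" where
  "cmb a b = (if a = b then return_pmf a
      else map_pmf (\<lambda>c. if c then a else b) (bernoulli_pmf (1/2)))"

lemma FD_node: "FD (Node p1 l p2 r) s =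
  (edge p1 s \<bind> FD l) \<bind> (\<lambda>A. (edge p2 s \<bind> FD r) \<bind> (\<lambda>B. return_pmf (fitch_comb A B)))"
proof -
  have "FD (Node p1 l p2 r) s = edge p1 s \<bind> (\<lambda>s1. edge p2 s \<bind> (\<lambda>s2. leaf_char l s1 \<bind>
     (\<lambda>f1. leaf_char r s2 \<bind> (\<lambda>f2. return_pmf (fitch_comb (fitch l f1) (fitch r f2))))))"
    unfolding FD_def
    by (auto simp: map_bind_pmf lc_len intro!: bind_pmf_cong)
  also have "\<dots> = edge p1 s \<bind> (\<lambda>s1. leaf_char l s1 \<bind> (\<lambda>f1. edge p2 s \<bind> (\<lambda>s2. 
     leaf_char r s2 \<bind> (\<lambda>f2. return_pmf (fitch_comb (fitch l f1) (fitch r f2))))))"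
    by (intro bind_pmf_cong refl bind_commute_pmf)
  also have "\<dots> = (edge p1 s \<bind> FD l) \<bind> (\<lambda>A. (edge p2 s \<bind> FD r) \<bind> (\<lambda>B. return_pmf (fitch_comb A B)))"
    by (simp add: FD_def bind_assoc_pmf map_pmf_def bind_return_pmf)
  finally show ?thesis .
qed

lemma CD_node: "CD (Node p1 l p2 r) s =
  (edge p1 s \<bind> CD l) \<bind> (\<lambda>a. (edge p2 s \<bind> CD r) \<bind> (\<lambda>b. cmb a b))"
proof -
  have "CD (Node p1 l p2 r) s = edge p1 s \<bind> (\<lambda>s1. edge p2 s \<bind> (\<lambda>s2. leaf_char l s1 \<bind>
     (\<lambda>f1. leaf_char r s2 \<bind> (\<lambda>f2. coin l f1 \<bind> (\<lambda>a. coin r f2 \<bind> (\<lambda>b. cmb a b))))))"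
    unfolding CD_def cmb_def
    by (auto simp: bind_assoc_pmf bind_return_pmf lc_len intro!: bind_pmf_cong)
  also have "\<dots> = edge p1 s \<bind> (\<lambda>s1. leaf_char l s1 \<bind> (\<lambda>f1. edge p2 s \<bind> (\<lambda>s2. 
     leaf_char r s2 \<bind> (\<lambda>f2. coin l f1 \<bind> (\<lambda>a. coin r f2 \<bind> (\<lambda>b. cmb a b))))))"
    by (intro bind_pmf_cong refl bind_commute_pmf)
  also have "\<dots> = edge p1 s \<bind> (\<lambda>s1. leaf_char l s1 \<bind> (\<lambda>f1. edge p2 s \<bind> (\<lambda>s2. 
     coin l f1 \<bind> (\<lambda>a. leaf_char r s2 \<bind> (\<lambda>f2. coin r f2 \<bind> (\<lambda>b. cmb a b))))))"
    by (intro bind_pmf_cong refl bind_commute_pmf)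
  also have "\<dots> = edge p1 s \<bind> (\<lambda>s1. leaf_char l s1 \<bind> (\<lambda>f1. 
     coin l f1 \<bind> (\<lambda>a. edge p2 s \<bind> (\<lambda>s2. leaf_char r s2 \<bind> (\<lambda>f2. coin r f2 \<bind> (\<lambda>b. cmb a b))))))"
    by (intro bind_pmf_cong refl bind_commute_pmf)
  also have "\<dots> = (edge p1 s \<bind> CD l) \<bind> (\<lambda>a. (edge p2 s \<bind> CD r) \<bind> (\<lambda>b. cmb a b))"
    by (simp add: CD_def bind_assoc_pmf)
  finally show ?thesis .
qed



definition ex :: "'a::finite pmf \<Rightarrow> ('a \<Rightarrow> real) \<Rightarrow> real" where
  "ex M g = (\<Sum>x\<in>UNIV. pmf M x * g x)"

lemma ex_bind: "ex (M \<bind> f) g = ex M (\<lambda>x. ex (f x) g)"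
proof -
  have "ex (M \<bind> f) g = (\<Sum>y\<in>UNIV. (\<Sum>x\<in>UNIV. pmf (f x) y * pmf M x) * g y)"
    unfolding ex_def pmf_bind by (subst integral_measure_pmf_real[where A=UNIV]) auto
  also have "\<dots> = (\<Sum>x\<in>UNIV. pmf M x * (\<Sum>y\<in>UNIV. pmf (f x) y * g y))"
    by (simp only: sum_distrib_left sum_distrib_right, subst sum.swap, simp add: mult_ac)
  finally show ?thesis by (simp add: ex_def)
qed

lemma ex_return: "ex (return_pmf x) g = g x"
  by (simp add: ex_def pmf_return indicator_def)

lemma ex_map: "ex (map_pmf f M) g = ex M (\<lambda>x. g (f x))"
  by (simp add: map_pmf_def ex_bind ex_return)

lemma ex_cong: "(\<And>x. x \<in> set_pmf M \<Longrightarrow> g x = g' x) \<Longrightarrow> ex M g = ex M g'"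
  unfolding ex_def by (intro sum.cong refl) (metis mult_zero_left set_pmf_iff)

lemma ex_lin: "ex M (\<lambda>x. u * f x + v * g x + w) = u * ex M f + v * ex M g + w"
proof -
  have "(\<Sum>x\<in>UNIV. pmf M x) = 1" by (rule sum_pmf_eq_1) auto
  then have "(\<Sum>x\<in>UNIV. pmf M x * w) = w" by (simp flip: sum_distrib_right)
  then show ?thesis
    unfolding ex_def by (simp add: distrib_left sum.distrib sum_distrib_left mult.left_commute)
qed

lemma ex_const: "ex M (\<lambda>x. w) = w"
  using ex_lin[of M 0 "\<lambda>_. 0" 0 "\<lambda>_. 0" w] by simp

lemma ex_nonneg: "(\<And>x. g x \<ge> 0) \<Longrightarrow> ex M g \<ge> 0"
  unfolding ex_def by (intro sum_nonneg mult_nonneg_nonneg) auto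

lemma ex_bern: "0 \<le> p \<Longrightarrow> p \<le> 1 \<Longrightarrow> ex (bernoulli_pmf p) g = p * g True + (1 - p) * g False"
  by (simp add: ex_def UNIV_bool)

lemma ex_edge: "0 \<le> p \<Longrightarrow> p \<le> 1 \<Longrightarrow> ex (edge p s) g = p * g (\<not> s) + (1 - p) * g s"
  by (simp add: edge_def ex_map ex_bern)

lemma ex_pmf: "pmf M a = ex M (\<lambda>x. if x = a then 1 else 0)"
  by (simp add: ex_def if_distrib cong: if_cong)



definition hh :: "bool \<Rightarrow> bool set \<Rightarrow> real" where
  "hh s S = (if s \<in> S then 1 else 0) - (if (\<not> s) \<in> S then 1 else 0)"
definition cc :: "bool set \<Rightarrow> real" where
  "cc S = (if True \<in> S \<and> False \<in> S then 1 else 0)"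
definition ee :: "bool \<Rightarrow> bool \<Rightarrow> real" where
  "ee s b = (if b = s then 1 else -1)"

lemma fitch_ne: "fitch T f \<noteq> {}"
  by (induction T arbitrary: f) (auto simp: fitch_comb_def)

lemma bset_eq: "(S::bool set) = T \<longleftrightarrow> ((True \<in> S) = (True \<in> T) \<and> (False \<in> S) = (False \<in> T))"
  by (simp add: set_eq_iff all_bool_eq)
lemma bset_cases: "(S::bool set) \<noteq> {} \<Longrightarrow> S = {s} \<or> S = {\<not> s} \<or> S = UNIV"
  by (cases s; cases "True \<in> S"; cases "False \<in> S") (simp_all add: bset_eq)

lemma hh_comb: "A \<noteq> {} \<Longrightarrow> B \<noteq> {} \<Longrightarrow>
  hh s (fitch_comb A B) = (hh s A * (1 + cc B) + hh s B * (1 + cc A)) / 2"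
  using bset_cases[of A s] bset_cases[of B s]
  by (cases s) (auto simp: fitch_comb_def hh_def cc_def)

lemma cc_comb: "A \<noteq> {} \<Longrightarrow> B \<noteq> {} \<Longrightarrow>
  cc (fitch_comb A B) = cc A * cc B + (1 - cc A) * (1 - cc B) / 2 - hh s A * hh s B / 2"
  using bset_cases[of A s] bset_cases[of B s]
  by (cases s) (auto simp: fitch_comb_def hh_def cc_def)

lemma hh_neg: "hh (\<not> s) S = - hh s S"
  by (simp add: hh_def)
lemma ee_neg: "ee (\<not> s) b = - ee s b"
  by (cases b; cases s) (simp_all add: ee_def)
lemma cc_nonneg: "cc S \<ge> 0" by (simp add: cc_def)

lemma ee_cmb: "ex (cmb a b) (ee s) = (ee s a + ee s b) / 2"
  by (cases a; cases b; cases s) (simp_all add: cmb_def ex_return ex_map ex_bern ee_def)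

lemma set_M_ne: "A \<in> set_pmf (M \<bind> FD l) \<Longrightarrow> A \<noteq> {}"
  by (auto simp: set_bind_pmf FD_def fitch_ne)



definition DD where "DD T s = ex (FD T s) (hh s)"
definition CC where "CC T s = ex (FD T s) cc"
definition EE where "EE T s = ex (CD T s) (ee s)"

lemma ex_neg: "ex M (\<lambda>x. - g x) = - ex M g"
  using ex_lin[of M "-1" g 0 g 0] by simp

lemma ex_lin2: "ex M (\<lambda>x. u * f x + v * g x + w) = u * ex M f + v * ex M g + w"
  by (rule ex_lin)

lemma Y_edge: "0 \<le> p \<Longrightarrow> p \<le> 1 \<Longrightarrow>
  ex (edge p s \<bind> FD l) (hh s) = (1 - p) * DD l s - p * DD l (\<not> s)"
proof -
  assume p: "0 \<le> p" "p \<le> 1"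
  have "ex (FD l (\<not> s)) (hh s) = - DD l (\<not> s)"
  proof -
    have e: "hh s = (\<lambda>S. - hh (\<not> s) S)" using hh_neg[of "\<not> s"] by auto
    show ?thesis unfolding DD_def by (subst e) (rule ex_neg)
  qed
  then show ?thesis using p by (simp add: ex_bind ex_edge DD_def algebra_simps)
qed

lemma X_edge: "0 \<le> p \<Longrightarrow> p \<le> 1 \<Longrightarrow>
  ex (edge p s \<bind> FD l) cc = (1 - p) * CC l s + p * CC l (\<not> s)"
  by (simp add: ex_bind ex_edge CC_def algebra_simps)

lemma E_edge: "0 \<le> p \<Longrightarrow> p \<le> 1 \<Longrightarrow>
  ex (edge p s \<bind> CD l) (ee s) = (1 - p) * EE l s - p * EE l (\<not> s)"
proof -
  assume p: "0 \<le> p" "p \<le> 1"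
  have "ex (CD l (\<not> s)) (ee s) = - EE l (\<not> s)"
  proof -
    have e: "ee s = (\<lambda>S. - ee (\<not> s) S)" using ee_neg[of "\<not> s"] by auto
    show ?thesis unfolding EE_def by (subst e) (rule ex_neg)
  qed
  then show ?thesis using p by (simp add: ex_bind ex_edge EE_def algebra_simps)
qed

lemma DD_node_gen:
  fixes M1 M2 :: "bool set pmf"
  assumes n1: "\<And>A. A \<in> set_pmf M1 \<Longrightarrow> A \<noteq> {}" and n2: "\<And>B. B \<in> set_pmf M2 \<Longrightarrow> B \<noteq> {}"
  shows "ex (M1 \<bind> (\<lambda>A. M2 \<bind> (\<lambda>B. return_pmf (fitch_comb A B)))) (hh s) =
    ((ex M2 cc + 1) / 2) * ex M1 (hh s) + (ex M2 (hh s) / 2) * ex M1 cc + ex M2 (hh s) / 2"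
proof -
  have "ex (M1 \<bind> (\<lambda>A. M2 \<bind> (\<lambda>B. return_pmf (fitch_comb A B)))) (hh s) =
     ex M1 (\<lambda>A. ex M2 (\<lambda>B. (hh s A / 2) * cc B + ((1 + cc A) / 2) * hh s B + hh s A / 2))"
    unfolding ex_bind ex_return
    by (intro ex_cong) (simp add: hh_comb n1 n2 field_simps)
  also have "\<dots> = ex M1 (\<lambda>A. (hh s A / 2) * ex M2 cc + ((1 + cc A) / 2) * ex M2 (hh s) + hh s A / 2)"
    by (simp only: ex_lin)
  also have "\<dots> = ex M1 (\<lambda>A. ((ex M2 cc + 1) / 2) * hh s A + (ex M2 (hh s) / 2) * cc A + ex M2 (hh s) / 2)"
    by (intro ex_cong) (simp add: field_simps)
  also have "\<dots> = ((ex M2 cc + 1) / 2) * ex M1 (hh s) + (ex M2 (hh s) / 2) * ex M1 cc + ex M2 (hh s) / 2"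
    by (rule ex_lin)
  finally show ?thesis .
qed

lemma CC_node_gen:
  fixes M1 M2 :: "bool set pmf"
  assumes n1: "\<And>A. A \<in> set_pmf M1 \<Longrightarrow> A \<noteq> {}" and n2: "\<And>B. B \<in> set_pmf M2 \<Longrightarrow> B \<noteq> {}"
  shows "ex (M1 \<bind> (\<lambda>A. M2 \<bind> (\<lambda>B. return_pmf (fitch_comb A B)))) cc =
    ((3 * ex M2 cc - 1) / 2) * ex M1 cc + (- ex M2 (hh s) / 2) * ex M1 (hh s) + (1 - ex M2 cc) / 2"
proof -
  have "ex (M1 \<bind> (\<lambda>A. M2 \<bind> (\<lambda>B. return_pmf (fitch_comb A B)))) cc =
     ex M1 (\<lambda>A. ex M2 (\<lambda>B. ((3 * cc A - 1) / 2) * cc B + (- hh s A / 2) * hh s B + (1 - cc A) / 2))"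
    unfolding ex_bind ex_return
    by (intro ex_cong) (simp add: cc_comb[of _ _ s] n1 n2 field_simps)
  also have "\<dots> = ex M1 (\<lambda>A. ((3 * cc A - 1) / 2) * ex M2 cc + (- hh s A / 2) * ex M2 (hh s) + (1 - cc A) / 2)"
    by (simp only: ex_lin)
  also have "\<dots> = ex M1 (\<lambda>A. ((3 * ex M2 cc - 1) / 2) * cc A + (- ex M2 (hh s) / 2) * hh s A + (1 - ex M2 cc) / 2)"
    by (intro ex_cong) (simp add: field_simps)
  also have "\<dots> = ((3 * ex M2 cc - 1) / 2) * ex M1 cc + (- ex M2 (hh s) / 2) * ex M1 (hh s) + (1 - ex M2 cc) / 2"
    by (rule ex_lin)
  finally show ?thesis .
qed



lemma FD_leaf: "FD Leaf s = return_pmf {s}" by (simp add: FD_def)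
lemma CD_leaf: "CD Leaf s = return_pmf s" by (simp add: CD_def bind_return_pmf)

lemma node_vals:
  assumes p: "0 \<le> p1" "p1 \<le> 1" "0 \<le> p2" "p2 \<le> 1"
    and sl: "DD l (\<not> t) = DD l t" "CC l (\<not> t) = CC l t" "EE l (\<not> t) = EE l t"
    and sr: "DD r (\<not> t) = DD r t" "CC r (\<not> t) = CC r t" "EE r (\<not> t) = EE r t"
  shows "DD (Node p1 l p2 r) t = ((CC r t + 1) / 2) * ((1 - 2 * p1) * DD l t)
            + ((1 - 2 * p2) * DD r t / 2) * CC l t + (1 - 2 * p2) * DD r t / 2"
    and "CC (Node p1 l p2 r) t = ((3 * CC r t - 1) / 2) * CC l t
            + (- ((1 - 2 * p2) * DD r t) / 2) * ((1 - 2 * p1) * DD l t) + (1 - CC r t) / 2"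
    and "EE (Node p1 l p2 r) t = ((1 - 2 * p1) * EE l t + (1 - 2 * p2) * EE r t) / 2"
proof -
  have Y1: "ex (edge p1 t \<bind> FD l) (hh t) = (1 - 2 * p1) * DD l t"
    using Y_edge[OF p(1,2), of t l] sl by (simp add: algebra_simps)
  have Y2: "ex (edge p2 t \<bind> FD r) (hh t) = (1 - 2 * p2) * DD r t"
    using Y_edge[OF p(3,4), of t r] sr by (simp add: algebra_simps)
  have X1: "ex (edge p1 t \<bind> FD l) cc = CC l t"
    using X_edge[OF p(1,2), of t l] sl by (simp add: algebra_simps)
  have X2: "ex (edge p2 t \<bind> FD r) cc = CC r t"
    using X_edge[OF p(3,4), of t r] sr by (simp add: algebra_simps)
  have E1: "ex (edge p1 t \<bind> CD l) (ee t) = (1 - 2 * p1) * EE l t"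
    using E_edge[OF p(1,2), of t l] sl by (simp add: algebra_simps)
  have E2: "ex (edge p2 t \<bind> CD r) (ee t) = (1 - 2 * p2) * EE r t"
    using E_edge[OF p(3,4), of t r] sr by (simp add: algebra_simps)
  show "DD (Node p1 l p2 r) t = ((CC r t + 1) / 2) * ((1 - 2 * p1) * DD l t)
            + ((1 - 2 * p2) * DD r t / 2) * CC l t + (1 - 2 * p2) * DD r t / 2"
    unfolding DD_def[of "Node p1 l p2 r"] FD_node
    by (subst DD_node_gen[where s=t], (erule set_M_ne)+) (simp add: X1 X2 Y1 Y2)
  show "CC (Node p1 l p2 r) t = ((3 * CC r t - 1) / 2) * CC l t
            + (- ((1 - 2 * p2) * DD r t) / 2) * ((1 - 2 * p1) * DD l t) + (1 - CC r t) / 2"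
    unfolding CC_def[of "Node p1 l p2 r"] FD_node
    by (subst CC_node_gen[where s=t], (erule set_M_ne)+) (simp add: X1 X2 Y1 Y2)
  have "EE (Node p1 l p2 r) t = ex (edge p1 t \<bind> CD l) (\<lambda>a. ex (edge p2 t \<bind> CD r) (\<lambda>b. (ee t a + ee t b) / 2))"
    unfolding EE_def[of "Node p1 l p2 r"] CD_node ex_bind ee_cmb ..
  also have "\<dots> = ex (edge p1 t \<bind> CD l) (\<lambda>a. (1/2) * ee t a + 0 * ee t a + ex (edge p2 t \<bind> CD r) (ee t) / 2)"
  proof (intro ex_cong)
    fix a
    have "ex (edge p2 t \<bind> CD r) (\<lambda>b. (1/2) * ee t b + 0 * ee t b + ee t a / 2) = 
       (1/2) * ex (edge p2 t \<bind> CD r) (ee t) + 0 * ex (edge p2 t \<bind> CD r) (ee t) + ee t a / 2"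
      by (rule ex_lin)
    moreover have "(\<lambda>b. (1/2) * ee t b + 0 * ee t b + ee t a / 2) = (\<lambda>b. (ee t a + ee t b) / 2)"
      by (auto simp: field_simps)
    ultimately show "ex (edge p2 t \<bind> CD r) (\<lambda>b. (ee t a + ee t b) / 2) =
        (1/2) * ee t a + 0 * ee t a + ex (edge p2 t \<bind> CD r) (ee t) / 2" by simp
  qed
  also have "\<dots> = (1/2) * ex (edge p1 t \<bind> CD l) (ee t) + 0 * ex (edge p1 t \<bind> CD l) (ee t) + ex (edge p2 t \<bind> CD r) (ee t) / 2"
    by (rule ex_lin)
  finally show "EE (Node p1 l p2 r) t = ((1 - 2 * p1) * EE l t + (1 - 2 * p2) * EE r t) / 2"
    by (simp add: E1 E2 field_simps)
qed

lemma CC_nonneg: "CC T s \<ge> 0"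
  unfolding CC_def by (rule ex_nonneg) (rule cc_nonneg)

lemma main: "valid_probs T \<Longrightarrow> \<forall>s. DD T (\<not> s) = DD T s \<and> CC T (\<not> s) = CC T s \<and> EE T (\<not> s) = EE T s
   \<and> 0 \<le> EE T s \<and> EE T s \<le> DD T s"
proof (induction T)
  case Leaf
  then show ?case by (simp add: DD_def CC_def EE_def FD_leaf CD_leaf ex_return hh_def cc_def ee_def)
next
  case (Node p1 l p2 r)
  then have p: "0 \<le> p1" "p1 \<le> 1" "0 \<le> p2" "p2 \<le> 1" "p1 \<le> 1/2" "p2 \<le> 1/2" by auto
  from Node have IHl: "\<And>s. DD l (\<not> s) = DD l s \<and> CC l (\<not> s) = CC l s \<and> EE l (\<not> s) = EE l s
   \<and> 0 \<le> EE l s \<and> EE l s \<le> DD l s" by auto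
  from Node have IHr: "\<And>s. DD r (\<not> s) = DD r s \<and> CC r (\<not> s) = CC r s \<and> EE r (\<not> s) = EE r s
   \<and> 0 \<le> EE r s \<and> EE r s \<le> DD r s" by auto
  show ?case
  proof
    fix s
    note vs = node_vals[OF p(1-4), of l s r] node_vals[OF p(1-4), of l "\<not> s" r]
    have sym: "DD (Node p1 l p2 r) (\<not> s) = DD (Node p1 l p2 r) s"
              "CC (Node p1 l p2 r) (\<not> s) = CC (Node p1 l p2 r) s"
              "EE (Node p1 l p2 r) (\<not> s) = EE (Node p1 l p2 r) s"
      using vs IHl[of s] IHr[of s] IHl[of "\<not> s"] IHr[of "\<not> s"] by simp_all
    have q1: "0 \<le> 1 - 2 * p1" "0 \<le> 1 - 2 * p2" using p by auto
    have e1: "0 \<le> (1 - 2 * p1) * EE l s" "0 \<le> (1 - 2 * p2) * EE r s"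
      using q1 IHl[of s] IHr[of s] by auto
    have d1: "(1 - 2 * p1) * EE l s \<le> (1 - 2 * p1) * DD l s"
             "(1 - 2 * p2) * EE r s \<le> (1 - 2 * p2) * DD r s"
      using q1 IHl[of s] IHr[of s] by (auto intro: mult_left_mono)
    have c: "0 \<le> CC r t * ((1 - 2 * p1) * DD l s)" "0 \<le> ((1 - 2 * p2) * DD r s) * CC l t" for t
      using CC_nonneg[of r t] CC_nonneg[of l t] e1 d1 by auto
    have "DD (Node p1 l p2 r) s = ((CC r s + 1) / 2) * ((1 - 2 * p1) * DD l s)
            + ((1 - 2 * p2) * DD r s / 2) * CC l s + (1 - 2 * p2) * DD r s / 2"
      "EE (Node p1 l p2 r) s = ((1 - 2 * p1) * EE l s + (1 - 2 * p2) * EE r s) / 2"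
      using vs IHl[of s] IHr[of s] by simp_all
    then have "0 \<le> EE (Node p1 l p2 r) s \<and> EE (Node p1 l p2 r) s \<le> DD (Node p1 l p2 r) s"
      using c[of s] e1 d1 by (simp add: field_simps)
    then show "DD (Node p1 l p2 r) (\<not> s) = DD (Node p1 l p2 r) s \<and> CC (Node p1 l p2 r) (\<not> s) = CC (Node p1 l p2 r) s
      \<and> EE (Node p1 l p2 r) (\<not> s) = EE (Node p1 l p2 r) s \<and> 0 \<le> EE (Node p1 l p2 r) s \<and> EE (Node p1 l p2 r) s \<le> DD (Node p1 l p2 r) s"
      using sym by blast
  qed
qed

lemma RA_MP_eq: "RA_MP T \<alpha> = 1/2 + DD T \<alpha> / 2"
proof -
  have "RA_MP T \<alpha> = pmf (FD T \<alpha> \<bind> pmf_of_set) \<alpha>"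
    by (simp add: RA_MP_def FD_def MP_def bind_map_pmf)
  also have "\<dots> = ex (FD T \<alpha>) (\<lambda>S. ex (pmf_of_set S) (\<lambda>x. if x = \<alpha> then 1 else 0))"
    by (subst ex_pmf) (rule ex_bind)
  also have "\<dots> = ex (FD T \<alpha>) (\<lambda>S. (1/2) * hh \<alpha> S + 0 * cc S + 1/2)"
  proof (intro ex_cong)
    fix S assume "S \<in> set_pmf (FD T \<alpha>)"
    then have ne: "S \<noteq> {}" by (auto simp: FD_def fitch_ne)
    have "ex (pmf_of_set S) (\<lambda>x. if x = \<alpha> then 1 else 0) = pmf (pmf_of_set S) \<alpha>"
      by (rule ex_pmf[symmetric])
    also have "\<dots> = (1/2) * hh \<alpha> S + 0 * cc S + 1/2"
      using bset_cases[OF ne, of \<alpha>] ne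
      by (auto simp: hh_def)
    finally show "ex (pmf_of_set S) (\<lambda>x. if x = \<alpha> then 1 else 0) = (1/2) * hh \<alpha> S + 0 * cc S + 1/2" .
  qed
  also have "\<dots> = 1/2 + DD T \<alpha> / 2"
    by (simp only: ex_lin DD_def)
  finally show ?thesis .
qed

lemma RA_coin_eq: "RA_coin T \<alpha> = 1/2 + EE T \<alpha> / 2"
proof -
  have "RA_coin T \<alpha> = ex (CD T \<alpha>) (\<lambda>x. if x = \<alpha> then 1 else 0)"
    unfolding RA_coin_def CD_def[symmetric] by (rule ex_pmf)
  also have "\<dots> = ex (CD T \<alpha>) (\<lambda>b. (1/2) * ee \<alpha> b + 0 * ee \<alpha> b + 1/2)"
    by (intro ex_cong) (simp add: ee_def)
  also have "\<dots> = 1/2 + EE T \<alpha> / 2"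
    by (simp only: ex_lin EE_def)
  finally show ?thesis .
qed

theorem theorem5:
  fixes T :: ptree and \<alpha> :: bool
  assumes "T \<noteq> Leaf" and "valid_probs T"
  shows "RA_MP T \<alpha> \<ge> RA_coin T \<alpha>"
  using main[OF assms(2)] by (simp add: RA_MP_eq RA_coin_eq)


end
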